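(* Let $H$ be a fixed infinite-dimensional separable Hilbert space and let $J$ be a homogeneous two-sided ideal in $\mathbb{C}\langle x_1,\dots,x_d\rangle$, $d<\infty$. Then $I(Z(J))=J$. In particular $Z(J)=\{(0,\dots,0)\}$ if and only if $J$ is the ideal generated by $x_1,\dots,x_d$.
   Context: $\mathbb{C}\langle x_1,\dots,x_d\rangle$ is the algebra of polynomials in noncommuting variables; a homogeneous ideal is a two-sided ideal generated by homogeneous polynomials. For $p=\sum_\alpha c_\alpha x^\alpha$ and $\underline T=(T_1,\dots,T_d)\in B(H)^d$, $p(\underline T)=\sum_\alpha c_\alpha T^\alpha$ with $T^{\alpha_1\cdots\alpha_k}=T_{\alpha_1}\cdots T_{\alpha_k}$ and $T^{\emptyset}=I_H$. $Z(J)=\{\underline T\in B(H)^d: p(\underline T)=0\ \forall p\in J\}$ and, for $Z\subseteq B(H)^d$, $I(Z)=\{p: p(\underline T)=0\ \forall\underline T\in Z\}$. *)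

theory Defs
  imports Complex_Main
begin

text \<open>A noncommutative polynomial is a finitely supported coefficient function on words;
  the word [a1,...,ak] (letters indexed from 0) stands for the monomial x_{a1+1}...x_{ak+1}.\<close>

definition nc_poly :: "nat \<Rightarrow> (nat list \<Rightarrow> complex) set" where
  "nc_poly d = {p. finite {w. p w \<noteq> 0} \<and> (\<forall>w. p w \<noteq> 0 \<longrightarrow> set w \<subseteq> {..<d})}"

definition nc_mult :: "(nat list \<Rightarrow> complex) \<Rightarrow> (nat list \<Rightarrow> complex) \<Rightarrow> (nat list \<Rightarrow> complex)" where
  "nc_mult p q = (\<lambda>w. \<Sum>i\<le>length w. p (take i w) * q (drop i w))"

definition nc_var :: "nat \<Rightarrow> (nat list \<Rightarrow> complex)" where
  "nc_var i = (\<lambda>w. if w = [i] then 1 else 0)"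

definition nc_homogeneous :: "(nat list \<Rightarrow> complex) \<Rightarrow> bool" where
  "nc_homogeneous p \<longleftrightarrow> (\<exists>k. \<forall>w. p w \<noteq> 0 \<longrightarrow> length w = k)"

definition nc_ideal :: "nat \<Rightarrow> (nat list \<Rightarrow> complex) set \<Rightarrow> bool" where
  "nc_ideal d J \<longleftrightarrow> J \<subseteq> nc_poly d \<and> (\<lambda>w. 0) \<in> J \<and> (\<forall>p\<in>J. \<forall>q\<in>J. (\<lambda>w. p w + q w) \<in> J)
     \<and> (\<forall>p\<in>J. \<forall>a\<in>nc_poly d. \<forall>b\<in>nc_poly d. nc_mult a (nc_mult p b) \<in> J)"

definition nc_gen_ideal :: "nat \<Rightarrow> (nat list \<Rightarrow> complex) set \<Rightarrow> (nat list \<Rightarrow> complex) set" where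
  "nc_gen_ideal d S = \<Inter>{J. nc_ideal d J \<and> S \<subseteq> J}"

definition nc_hom_ideal :: "nat \<Rightarrow> (nat list \<Rightarrow> complex) set \<Rightarrow> bool" where
  "nc_hom_ideal d J \<longleftrightarrow> nc_ideal d J \<and>
     (\<exists>S \<subseteq> nc_poly d. (\<forall>s\<in>S. nc_homogeneous s) \<and> J = nc_gen_ideal d S)"

definition l2 :: "(nat \<Rightarrow> complex) set" where
  "l2 = {x. summable (\<lambda>n. (cmod (x n))\<^sup>2)}"

definition l2norm :: "(nat \<Rightarrow> complex) \<Rightarrow> real" where
  "l2norm x = sqrt (\<Sum>n. (cmod (x n))\<^sup>2)"

text \<open>Bounded operators on l^2, normalised to be 0 outside l^2 so that equality is genuine.\<close>
definition bop :: "((nat \<Rightarrow> complex) \<Rightarrow> (nat \<Rightarrow> complex)) set" where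
  "bop = {T. (\<forall>x\<in>l2. T x \<in> l2)
            \<and> (\<forall>x\<in>l2. \<forall>y\<in>l2. T (\<lambda>n. x n + y n) = (\<lambda>n. T x n + T y n))
            \<and> (\<forall>x\<in>l2. \<forall>c. T (\<lambda>n. c * x n) = (\<lambda>n. c * T x n))
            \<and> (\<exists>C. \<forall>x\<in>l2. l2norm (T x) \<le> C * l2norm x)
            \<and> (\<forall>x. x \<notin> l2 \<longrightarrow> T x = (\<lambda>n. 0))}"

definition idH :: "(nat \<Rightarrow> complex) \<Rightarrow> (nat \<Rightarrow> complex)" where
  "idH = (\<lambda>x. if x \<in> l2 then x else (\<lambda>n. 0))"

definition zeroH :: "(nat \<Rightarrow> complex) \<Rightarrow> (nat \<Rightarrow> complex)" where
  "zeroH = (\<lambda>x n. 0)"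

fun opword :: "((nat \<Rightarrow> complex) \<Rightarrow> (nat \<Rightarrow> complex)) list \<Rightarrow> nat list
                 \<Rightarrow> (nat \<Rightarrow> complex) \<Rightarrow> (nat \<Rightarrow> complex)" where
  "opword T [] = idH"
| "opword T (a # w) = (T ! a) \<circ> opword T w"

definition nc_eval :: "(nat list \<Rightarrow> complex) \<Rightarrow> ((nat \<Rightarrow> complex) \<Rightarrow> (nat \<Rightarrow> complex)) list
                          \<Rightarrow> (nat \<Rightarrow> complex) \<Rightarrow> (nat \<Rightarrow> complex)" where
  "nc_eval p T = (\<lambda>x n. \<Sum>w\<in>{w. p w \<noteq> 0}. p w * opword T w x n)"

definition Zset :: "nat \<Rightarrow> (nat list \<Rightarrow> complex) set
                      \<Rightarrow> ((nat \<Rightarrow> complex) \<Rightarrow> (nat \<Rightarrow> complex)) list set" where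
  "Zset d J = {T. length T = d \<and> set T \<subseteq> bop \<and> (\<forall>p\<in>J. nc_eval p T = zeroH)}"

definition Iset :: "nat \<Rightarrow> ((nat \<Rightarrow> complex) \<Rightarrow> (nat \<Rightarrow> complex)) list set
                      \<Rightarrow> (nat list \<Rightarrow> complex) set" where
  "Iset d Z = {p \<in> nc_poly d. \<forall>T\<in>Z. nc_eval p T = zeroH}"

end

theory Submission
  imports Defs "HOL-Library.Function_Algebras" "HOL-Library.Countable"
begin


definition supp :: "(nat list \<Rightarrow> complex) \<Rightarrow> nat list set" where
  "supp p = {w. p w \<noteq> 0}"
definition cst :: "complex \<Rightarrow> nat list \<Rightarrow> complex" where
  "cst c = (\<lambda>w. if w = [] then c else 0)"
definition mono :: "nat list \<Rightarrow> nat list \<Rightarrow> complex" where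
  "mono u = (\<lambda>w. if w = u then 1 else 0)"
definition comp :: "nat \<Rightarrow> (nat list \<Rightarrow> complex) \<Rightarrow> nat list \<Rightarrow> complex" where
  "comp k p = (\<lambda>w. if length w = k then p w else 0)"

lemma nc_mult_cst_left: "nc_mult (cst c) r = (\<lambda>w. c * r w)"
proof
  fix w show "nc_mult (cst c) r w = c * r w"
  proof (cases w)
    case Nil then show ?thesis by (simp add: nc_mult_def cst_def)
  next
    case (Cons a v)
    then show ?thesis
      unfolding nc_mult_def cst_def by (simp add: sum.atMost_Suc_shift del: sum.atMost_Suc)
  qed
qed

lemma nc_mult_cst_right: "nc_mult r (cst c) = (\<lambda>w. r w * c)"
proof
  fix w
  have "nc_mult r (cst c) w = (\<Sum>i<length w. r (take i w) * cst c (drop i w)) + r w * c"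
    unfolding nc_mult_def lessThan_Suc_atMost[symmetric] by (simp add: cst_def)
  also have "(\<Sum>i<length w. r (take i w) * cst c (drop i w)) = 0"
    by (intro sum.neutral) (auto simp: cst_def)
  finally show "nc_mult r (cst c) w = r w * c" by simp
qed

lemma nc_mult_mono_left:
  "nc_mult (mono u) r w = (if length u \<le> length w \<and> take (length u) w = u then r (drop (length u) w) else 0)"
proof -
  have "nc_mult (mono u) r w = (\<Sum>i\<le>length w. if i = length u \<and> take (length u) w = u then r (drop (length u) w) else 0)"
    unfolding nc_mult_def mono_def
    by (intro sum.cong) auto
  also have "\<dots> = (if length u \<le> length w \<and> take (length u) w = u then r (drop (length u) w) else 0)"
    by (cases "take (length u) w = u") (auto simp: sum.delta)
  finally show ?thesis .
qed

lemma nc_mult_mono_right: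
  "nc_mult r (mono u) w = (if length u \<le> length w \<and> drop (length w - length u) w = u then r (take (length w - length u) w) else 0)"
proof -
  have "nc_mult r (mono u) w = (\<Sum>i\<le>length w. if i = length w - length u \<and> length u \<le> length w \<and> drop (length w - length u) w = u then r (take (length w - length u) w) else 0)"
    unfolding nc_mult_def mono_def
    by (intro sum.cong) auto
  also have "\<dots> = (if length u \<le> length w \<and> drop (length w - length u) w = u then r (take (length w - length u) w) else 0)"
    by (cases "length u \<le> length w \<and> drop (length w - length u) w = u") (auto simp: sum.delta)
  finally show ?thesis .
qed

lemma nc_mult_nonzero:
  assumes "nc_mult a b w \<noteq> 0"
  shows "\<exists>i\<le>length w. a (take i w) \<noteq> 0 \<and> b (drop i w) \<noteq> 0"
proof -
  from assms obtain i where "i \<in> {..length w}" "a (take i w) * b (drop i w) \<noteq> 0"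
    unfolding nc_mult_def using sum.not_neutral_contains_not_neutral by blast
  then show ?thesis by auto
qed

lemma nc_poly_mult:
  assumes "a \<in> nc_poly d" "b \<in> nc_poly d"
  shows "nc_mult a b \<in> nc_poly d"
proof -
  have sub: "{w. nc_mult a b w \<noteq> 0} \<subseteq> (\<lambda>(x,y). x @ y) ` ({w. a w \<noteq> 0} \<times> {w. b w \<noteq> 0})"
  proof
    fix w assume "w \<in> {w. nc_mult a b w \<noteq> 0}"
    then obtain i where "a (take i w) \<noteq> 0" "b (drop i w) \<noteq> 0"
      using nc_mult_nonzero by blast
    then show "w \<in> (\<lambda>(x,y). x @ y) ` ({w. a w \<noteq> 0} \<times> {w. b w \<noteq> 0})"
      by (intro image_eqI[of _ _ "(take i w, drop i w)"]) auto
  qed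
  have "finite {w. nc_mult a b w \<noteq> 0}"
    using assms unfolding nc_poly_def by (intro finite_subset[OF sub]) auto
  moreover have "set w \<subseteq> {..<d}" if nz: "nc_mult a b w \<noteq> 0" for w
  proof -
    obtain i where "a (take i w) \<noteq> 0" "b (drop i w) \<noteq> 0"
      using nc_mult_nonzero[OF nz] by blast
    then have "set (take i w) \<subseteq> {..<d}" "set (drop i w) \<subseteq> {..<d}"
      using assms unfolding nc_poly_def by auto
    then show ?thesis
      by (metis append_take_drop_id le_sup_iff set_append)
  qed
  ultimately show ?thesis unfolding nc_poly_def by auto
qed

lemma nc_poly_add: "p \<in> nc_poly d \<Longrightarrow> q \<in> nc_poly d \<Longrightarrow> (\<lambda>w. p w + q w) \<in> nc_poly d"
proof -
  assume a: "p \<in> nc_poly d" "q \<in> nc_poly d"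
  have "{w. p w + q w \<noteq> 0} \<subseteq> {w. p w \<noteq> 0} \<union> {w. q w \<noteq> 0}" by auto
  moreover have "\<forall>w. p w + q w \<noteq> 0 \<longrightarrow> set w \<subseteq> {..<d}"
  proof (intro allI impI)
    fix w assume "p w + q w \<noteq> 0"
    then have "p w \<noteq> 0 \<or> q w \<noteq> 0" by auto
    then show "set w \<subseteq> {..<d}" using a unfolding nc_poly_def by blast
  qed
  moreover have "finite ({w. p w \<noteq> 0} \<union> {w. q w \<noteq> 0})" using a unfolding nc_poly_def by auto
  ultimately show ?thesis unfolding nc_poly_def using finite_subset by blast
qed

lemma nc_poly_zero: "(\<lambda>w. 0) \<in> nc_poly d"
  unfolding nc_poly_def by auto

lemma nc_poly_sub: "p \<in> nc_poly d \<Longrightarrow> (\<And>w. q w \<noteq> 0 \<Longrightarrow> p w \<noteq> 0) \<Longrightarrow> q \<in> nc_poly d"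
  unfolding nc_poly_def
proof (intro CollectI conjI, goal_cases)
  case 1
  then show ?case by (metis (mono_tags, lifting) finite_subset mem_Collect_eq subsetI)
next
  case 2
  then show ?case by blast
qed

lemma nc_poly_fin: "finite {w. q w \<noteq> 0} \<Longrightarrow> (\<And>w. q w \<noteq> 0 \<Longrightarrow> set w \<subseteq> {..<d}) \<Longrightarrow> q \<in> nc_poly d"
  unfolding nc_poly_def by blast

lemma nc_poly_cst: "cst c \<in> nc_poly d"
proof (rule nc_poly_fin)
  show "finite {w. cst c w \<noteq> 0}"
    by (rule finite_subset[of _ "{[]}"]) (auto simp: cst_def)
  show "set w \<subseteq> {..<d}" if "cst c w \<noteq> 0" for w
    using that by (cases "w = []") (auto simp: cst_def)
qed

lemma nc_poly_mono: "set u \<subseteq> {..<d} \<Longrightarrow> mono u \<in> nc_poly d"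
proof (rule nc_poly_fin)
  show "finite {w. mono u w \<noteq> 0}"
    by (rule finite_subset[of _ "{u}"]) (auto simp: mono_def)
  show "set w \<subseteq> {..<d}" if "mono u w \<noteq> 0" "set u \<subseteq> {..<d}" for w
    using that by (cases "w = u") (auto simp: mono_def)
qed

lemma nc_poly_comp: "p \<in> nc_poly d \<Longrightarrow> comp k p \<in> nc_poly d"
  by (erule nc_poly_sub) (simp add: comp_def split: if_splits)

lemma nc_poly_scale: "p \<in> nc_poly d \<Longrightarrow> (\<lambda>w. c * p w) \<in> nc_poly d"
  by (erule nc_poly_sub) simp

lemma nc_ideal_poly: "nc_ideal d (nc_poly d)"
  unfolding nc_ideal_def by (simp add: nc_poly_zero nc_poly_add nc_poly_mult)

lemma nc_idealI:
  assumes "J \<subseteq> nc_poly d" "(\<lambda>w. 0) \<in> J" "\<And>p q. p \<in> J \<Longrightarrow> q \<in> J \<Longrightarrow> (\<lambda>w. p w + q w) \<in> J"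
    "\<And>p a b. p \<in> J \<Longrightarrow> a \<in> nc_poly d \<Longrightarrow> b \<in> nc_poly d \<Longrightarrow> nc_mult a (nc_mult p b) \<in> J"
  shows "nc_ideal d J"
  using assms unfolding nc_ideal_def by blast

lemma gen_ideal:
  assumes "S \<subseteq> nc_poly d"
  shows "nc_ideal d (nc_gen_ideal d S)" "S \<subseteq> nc_gen_ideal d S"
proof -
  show "S \<subseteq> nc_gen_ideal d S" unfolding nc_gen_ideal_def by auto
  have ne: "nc_poly d \<in> {J. nc_ideal d J \<and> S \<subseteq> J}" using assms nc_ideal_poly by auto
  show "nc_ideal d (nc_gen_ideal d S)"
  proof (rule nc_idealI)
    show "nc_gen_ideal d S \<subseteq> nc_poly d" using ne unfolding nc_gen_ideal_def by blast
  qed (auto simp: nc_ideal_def nc_gen_ideal_def)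
qed

lemma gen_ideal_least: "nc_ideal d I \<Longrightarrow> S \<subseteq> I \<Longrightarrow> nc_gen_ideal d S \<subseteq> I"
  unfolding nc_gen_ideal_def by auto

context
  fixes d J assumes J: "nc_ideal d J"
begin

lemma id_poly: "q \<in> J \<Longrightarrow> q \<in> nc_poly d"
  using J unfolding nc_ideal_def by auto

lemma id_zero: "(\<lambda>w. 0) \<in> J"
  using J unfolding nc_ideal_def by auto

lemma id_add: "p \<in> J \<Longrightarrow> q \<in> J \<Longrightarrow> (\<lambda>w. p w + q w) \<in> J"
  using J unfolding nc_ideal_def by auto

lemma id_mult: "p \<in> J \<Longrightarrow> a \<in> nc_poly d \<Longrightarrow> b \<in> nc_poly d \<Longrightarrow> nc_mult a (nc_mult p b) \<in> J"
  using J unfolding nc_ideal_def by auto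

lemma id_scale: "p \<in> J \<Longrightarrow> (\<lambda>w. c * p w) \<in> J"
  using id_mult[of p "cst c" "cst 1"] nc_poly_cst
  by (simp add: nc_mult_cst_left nc_mult_cst_right)

lemma id_lmono: "p \<in> J \<Longrightarrow> set u \<subseteq> {..<d} \<Longrightarrow> nc_mult (mono u) p \<in> J"
  using id_mult[of p "mono u" "cst 1"] nc_poly_cst nc_poly_mono
  by (simp add: nc_mult_cst_right)

lemma id_rmono: "p \<in> J \<Longrightarrow> set u \<subseteq> {..<d} \<Longrightarrow> nc_mult p (mono u) \<in> J"
  using id_mult[of p "cst 1" "mono u"] nc_poly_cst nc_poly_mono
  by (simp add: nc_mult_cst_left)

lemma id_sum: "finite A \<Longrightarrow> (\<And>i. i \<in> A \<Longrightarrow> f i \<in> J) \<Longrightarrow> (\<lambda>w. \<Sum>i\<in>A. f i w) \<in> J"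
proof (induction A rule: finite_induct)
  case empty then show ?case using id_zero by simp
next
  case (insert x F)
  then show ?case using id_add[of "f x" "\<lambda>w. \<Sum>i\<in>F. f i w"] by simp
qed

end




lemma comp_mult: "comp k (nc_mult a r) w = (\<Sum>i\<le>k. nc_mult (comp i a) (comp (k-i) r) w)"
proof -
  let ?n = "length w"
  have "(\<Sum>i\<le>k. nc_mult (comp i a) (comp (k-i) r) w) =
        (\<Sum>i\<le>k. \<Sum>m\<le>?n. if i = m then (if ?n - m = k - i then a (take m w) * r (drop m w) else 0) else 0)"
    unfolding nc_mult_def comp_def by (intro sum.cong refl) (auto simp: min_def)
  also have "\<dots> = (\<Sum>m\<le>?n. \<Sum>i\<le>k. if i = m then (if ?n - m = k - i then a (take m w) * r (drop m w) else 0) else 0)"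
    by (rule sum.swap)
  also have "\<dots> = (\<Sum>m\<le>?n. if m \<le> k then (if ?n - m = k - m then a (take m w) * r (drop m w) else 0) else 0)"
    by (intro sum.cong refl) (simp add: sum.delta')
  also have "\<dots> = comp k (nc_mult a r) w"
  proof (cases "?n = k")
    case True
    then show ?thesis unfolding comp_def nc_mult_def by (auto intro!: sum.cong)
  next
    case False
    have "(if m \<le> k then (if ?n - m = k - m then a (take m w) * r (drop m w) else 0) else 0) = 0" if "m \<in> {..?n}" for m
      using False that by auto
    then show ?thesis using False unfolding comp_def by (simp add: sum.neutral)
  qed
  finally show ?thesis by simp
qed

lemma comp_mult': "comp k (nc_mult a r) = (\<lambda>w. \<Sum>i\<le>k. nc_mult (comp i a) (comp (k-i) r) w)"
  using comp_mult by blast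

lemma mult_sum_right: "nc_mult a (\<lambda>w. \<Sum>j\<in>A. f j w) = (\<lambda>w. \<Sum>j\<in>A. nc_mult a (f j) w)"
  unfolding nc_mult_def by (simp add: sum_distrib_left sum.swap[of _ A])

lemma comp_hom:
  assumes "nc_homogeneous s"
  shows "comp k s = s \<or> comp k s = (\<lambda>w. 0)"
proof -
  from assms obtain m where m: "\<And>w. s w \<noteq> 0 \<Longrightarrow> length w = m" unfolding nc_homogeneous_def by blast
  show ?thesis
  proof (cases "k = m")
    case True
    then have "comp k s = s" unfolding comp_def using m by (auto simp: fun_eq_iff)
    then show ?thesis ..
  next
    case False
    then have "comp k s = (\<lambda>w. 0)" unfolding comp_def using m by (auto simp: fun_eq_iff)
    then show ?thesis ..
  qed
qed

lemma graded:
  assumes H: "nc_hom_ideal d J" and q: "q \<in> J"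
  shows "comp k q \<in> J"
proof -
  have J: "nc_ideal d J" using H unfolding nc_hom_ideal_def by blast
  from H obtain S where S: "S \<subseteq> nc_poly d" "\<forall>s\<in>S. nc_homogeneous s" "J = nc_gen_ideal d S"
    unfolding nc_hom_ideal_def by blast
  define J' where "J' = {q \<in> nc_poly d. \<forall>k. comp k q \<in> J}"
  have "nc_ideal d J'"
  proof (rule nc_idealI)
    show "J' \<subseteq> nc_poly d" unfolding J'_def by blast
    show "(\<lambda>w. 0) \<in> J'" unfolding J'_def comp_def using nc_poly_zero id_zero[OF J] by simp
    show "(\<lambda>w. p w + q w) \<in> J'" if "p \<in> J'" "q \<in> J'" for p q
    proof -
      have "comp k (\<lambda>w. p w + q w) = (\<lambda>w. comp k p w + comp k q w)" for k
        unfolding comp_def by auto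
      then show ?thesis using that id_add[OF J] nc_poly_add unfolding J'_def by auto
    qed
    show "nc_mult a (nc_mult p b) \<in> J'" if p: "p \<in> J'" and a: "a \<in> nc_poly d" and b: "b \<in> nc_poly d" for p a b
    proof -
      have "comp k (nc_mult a (nc_mult p b)) \<in> J" for k
      proof -
        have "comp k (nc_mult a (nc_mult p b)) =
          (\<lambda>w. \<Sum>i\<le>k. \<Sum>j\<le>k-i. nc_mult (comp i a) (nc_mult (comp j p) (comp (k-i-j) b)) w)"
          by (simp add: fun_eq_iff comp_mult comp_mult'[of _ p b] mult_sum_right diff_diff_add)
        also have "\<dots> \<in> J"
          using p a b nc_poly_comp unfolding J'_def
          by (intro id_sum[OF J] finite_atMost) (auto intro!: id_mult[OF J] id_sum[OF J])
        finally show ?thesis .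
      qed
      then show ?thesis using p a b unfolding J'_def by (auto intro: nc_poly_mult)
    qed
  qed
  moreover have "S \<subseteq> J'"
  proof
    fix s assume "s \<in> S"
    then have "s \<in> J" "s \<in> nc_poly d" "nc_homogeneous s" using S gen_ideal(2)[OF S(1)] by auto
    moreover have "comp k s \<in> J" for k
      using comp_hom[OF \<open>nc_homogeneous s\<close>, of k] \<open>s \<in> J\<close> id_zero[OF J] by auto
    ultimately show "s \<in> J'" unfolding J'_def by blast
  qed
  ultimately have "J \<subseteq> J'" using S(3) gen_ideal_least by blast
  then show ?thesis using q unfolding J'_def by blast
qed



lemma l2_fin: "finite S \<Longrightarrow> (\<And>n. n \<notin> S \<Longrightarrow> x n = 0) \<Longrightarrow> x \<in> l2"
  unfolding l2_def by (auto intro: summable_finite[of S])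

lemma l2_zero: "(\<lambda>n. 0) \<in> l2"
  by (rule l2_fin[of "{}"]) auto

lemma l2_add: assumes "x \<in> l2" "y \<in> l2" shows "(\<lambda>n. x n + y n) \<in> l2"
proof -
  have le: "(cmod (x n + y n))\<^sup>2 \<le> 2 * (cmod (x n))\<^sup>2 + 2 * (cmod (y n))\<^sup>2" for n
  proof -
    have "cmod (x n + y n) \<le> cmod (x n) + cmod (y n)" by (rule norm_triangle_ineq)
    then have "(cmod (x n + y n))\<^sup>2 \<le> (cmod (x n) + cmod (y n))\<^sup>2"
      by (intro power_mono) auto
    also have "\<dots> \<le> 2 * (cmod (x n))\<^sup>2 + 2 * (cmod (y n))\<^sup>2"
    proof -
      have "0 \<le> (cmod (x n) - cmod (y n))\<^sup>2" by simp
      then show ?thesis unfolding power2_sum power2_diff by linarith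
    qed
    finally show ?thesis .
  qed
  have g: "summable (\<lambda>n. 2 * (cmod (x n))\<^sup>2 + 2 * (cmod (y n))\<^sup>2)"
  proof -
    have "summable (\<lambda>n. (cmod (x n))\<^sup>2)" "summable (\<lambda>n. (cmod (y n))\<^sup>2)"
      using assms unfolding l2_def by auto
    then show ?thesis by (intro summable_add summable_mult)
  qed
  have "summable (\<lambda>n. (cmod (x n + y n))\<^sup>2)"
    by (rule summable_comparison_test'[OF g]) (use le in simp)
  then show ?thesis unfolding l2_def by simp
qed

lemma l2_scale: assumes "x \<in> l2" shows "(\<lambda>n. c * x n) \<in> l2"
  using assms unfolding l2_def by (simp add: norm_mult power_mult_distrib summable_mult)

lemma l2_coord: assumes "x \<in> l2" shows "cmod (x m) \<le> l2norm x"
proof -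
  have "(cmod (x m))\<^sup>2 \<le> (\<Sum>n. (cmod (x n))\<^sup>2)"
    using assms unfolding l2_def
    using sum_le_suminf[of "\<lambda>n. (cmod (x n))\<^sup>2" "{m}"] by auto
  then have "sqrt ((cmod (x m))\<^sup>2) \<le> l2norm x" unfolding l2norm_def by (rule real_sqrt_le_mono)
  then show ?thesis by simp
qed

lemma l2norm_fin: "finite S \<Longrightarrow> (\<And>n. n \<notin> S \<Longrightarrow> x n = 0) \<Longrightarrow> l2norm x = sqrt (\<Sum>n\<in>S. (cmod (x n))\<^sup>2)"
  unfolding l2norm_def by (subst suminf_finite[of S]) auto

lemma bop_fin:
  fixes Y :: "'j \<Rightarrow> nat \<Rightarrow> complex"
  assumes F: "finite F" and S: "finite S" and Y: "\<And>j n. j \<in> F \<Longrightarrow> n \<notin> S \<Longrightarrow> Y j n = 0"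
  shows "(\<lambda>x. if x \<in> l2 then (\<lambda>n. \<Sum>j\<in>F. x (a j) * Y j n) else (\<lambda>n. 0)) \<in> bop"
    (is "?T \<in> bop")
proof -
  have img: "?T x \<in> l2" if "x \<in> l2" for x
    using that Y by (intro l2_fin[OF S]) auto
  define K where "K = (\<Sum>j\<in>F. \<Sum>n\<in>S. cmod (Y j n))"
  have bnd: "l2norm (?T x) \<le> (sqrt (card S) * K) * l2norm x" if x: "x \<in> l2" for x
  proof -
    let ?L = "l2norm x"
    have L0: "0 \<le> ?L" using x unfolding l2norm_def l2_def by (simp add: suminf_nonneg)
    have pt: "cmod (?T x n) \<le> ?L * K" for n
    proof -
      have "cmod (?T x n) \<le> (\<Sum>j\<in>F. cmod (x (a j)) * cmod (Y j n))"
        using x by (simp add: norm_mult[symmetric]) (rule norm_sum)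
      also have "\<dots> \<le> (\<Sum>j\<in>F. ?L * cmod (Y j n))"
        by (intro sum_mono mult_right_mono l2_coord[OF x]) auto
      also have "\<dots> = ?L * (\<Sum>j\<in>F. cmod (Y j n))" by (simp add: sum_distrib_left)
      also have "\<dots> \<le> ?L * K"
      proof (intro mult_left_mono L0)
        have "cmod (Y j n) \<le> (\<Sum>n\<in>S. cmod (Y j n))" if "j \<in> F" for j
        proof (cases "n \<in> S")
          case True then show ?thesis using S by (intro member_le_sum) auto
        next
          case False then show ?thesis using Y[OF that False] by (simp add: sum_nonneg)
        qed
        then show "(\<Sum>j\<in>F. cmod (Y j n)) \<le> K" unfolding K_def by (rule sum_mono)
      qed
      finally show ?thesis .
    qed
    have "l2norm (?T x) = sqrt (\<Sum>n\<in>S. (cmod (?T x n))\<^sup>2)"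
      using x Y by (intro l2norm_fin[OF S]) auto
    also have "\<dots> \<le> sqrt (\<Sum>n\<in>S. (?L * K)\<^sup>2)"
      by (intro real_sqrt_le_mono sum_mono power_mono pt) auto
    also have "\<dots> = sqrt (card S) * (?L * K)"
      using L0 by (simp add: real_sqrt_mult K_def sum_nonneg)
    finally show ?thesis by (simp add: algebra_simps)
  qed
  show ?thesis unfolding bop_def
  proof (intro CollectI conjI ballI allI impI)
    show "?T x \<in> l2" if "x \<in> l2" for x using img that .
    show "?T (\<lambda>n. x n + y n) = (\<lambda>n. ?T x n + ?T y n)" if "x \<in> l2" "y \<in> l2" for x y
      using that l2_add[OF that] by (simp add: distrib_right sum.distrib)
    show "?T (\<lambda>n. c * x n) = (\<lambda>n. c * ?T x n)" if "x \<in> l2" for x c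
      using that l2_scale[OF that] by (simp add: sum_distrib_left mult.assoc)
    show "\<exists>C. \<forall>x\<in>l2. l2norm (?T x) \<le> C * l2norm x" using bnd by blast
    show "?T x = (\<lambda>n. 0)" if "x \<notin> l2" for x using that by simp
  qed
qed



definition trunc :: "nat \<Rightarrow> (nat list \<Rightarrow> complex) \<Rightarrow> nat list \<Rightarrow> complex" where
  "trunc k p = (\<lambda>w. if length w \<le> k then p w else 0)"

definition pr :: "(nat list \<Rightarrow> complex) \<Rightarrow> (nat list \<Rightarrow> complex) \<Rightarrow> complex" where
  "pr q g = (\<Sum>u\<in>{u. q u \<noteq> 0}. q u * g u)"

definition sh :: "nat list \<Rightarrow> (nat list \<Rightarrow> complex) \<Rightarrow> nat list \<Rightarrow> complex" where
  "sh u g = (\<lambda>w. g (w @ u))"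

definition sc :: "complex \<Rightarrow> (nat list \<Rightarrow> complex) \<Rightarrow> nat list \<Rightarrow> complex" where
  "sc c f = (\<lambda>w. c * f w)"

lemma comp0: "comp 0 q = cst (q [])"
  unfolding comp_def cst_def by auto

lemma trunc_sum: "trunc k q = (\<lambda>w. \<Sum>j\<le>k. comp j q w)"
  unfolding trunc_def comp_def by (auto simp: fun_eq_iff sum.delta')

context
  fixes d J assumes H: "nc_hom_ideal d J"
begin

lemma HJ: "nc_ideal d J" using H unfolding nc_hom_ideal_def by blast

lemma trunc_in: "q \<in> J \<Longrightarrow> trunc k q \<in> J"
  unfolding trunc_sum by (intro id_sum[OF HJ] finite_atMost graded[OF H])

lemma const_zero:
  assumes p: "p \<in> nc_poly d" "p \<notin> J" and q: "q \<in> J"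
  shows "q [] = 0"
proof (rule ccontr)
  assume nz: "q [] \<noteq> 0"
  have "cst (q []) \<in> J" using graded[OF H q, of 0] by (simp add: comp0)
  from id_scale[OF HJ this, of "1 / q []"]
  have "(\<lambda>w. 1 / q [] * cst (q []) w) \<in> J" .
  moreover have "(\<lambda>w. 1 / q [] * cst (q []) w) = cst 1" using nz by (auto simp: cst_def fun_eq_iff)
  ultimately have c1: "cst 1 \<in> J" by simp
  have "nc_mult p (nc_mult (cst 1) (cst 1)) \<in> J"
    by (rule id_mult[OF HJ c1 p(1) nc_poly_cst])
  moreover have "nc_mult p (nc_mult (cst 1) (cst 1)) = p"
  proof -
    have "nc_mult (cst 1) (cst 1) = cst 1" by (simp add: nc_mult_cst_left)
    then show ?thesis by (simp add: nc_mult_cst_right)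
  qed
  ultimately show False using p by simp
qed

end

lemma pr_W:
  assumes "finite {u. q u \<noteq> 0}" "finite W" "\<And>u. u \<notin> W \<Longrightarrow> g u = 0"
  shows "pr q g = (\<Sum>u\<in>W. q u * g u)"
proof -
  have "pr q g = (\<Sum>u\<in>{u. q u \<noteq> 0} \<union> W. q u * g u)"
    unfolding pr_def using assms by (intro sum.mono_neutral_left) auto
  also have "\<dots> = (\<Sum>u\<in>W. q u * g u)"
    using assms by (intro sum.mono_neutral_right) auto
  finally show ?thesis .
qed

lemma pr_rmono:
  assumes "finite {u. q u \<noteq> 0}"
  shows "pr (nc_mult q (mono v)) g = (\<Sum>u\<in>{u. q u \<noteq> 0}. q u * g (u @ v))"
proof -
  let ?m = "nc_mult q (mono v)"
  have val: "?m (u @ v) = q u" for u by (simp add: nc_mult_mono_right)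
  have sub: "{x. ?m x \<noteq> 0} \<subseteq> (\<lambda>u. u @ v) ` {u. q u \<noteq> 0}"
  proof
    fix x assume "x \<in> {x. ?m x \<noteq> 0}"
    then have "length v \<le> length x" "drop (length x - length v) x = v" "q (take (length x - length v) x) \<noteq> 0"
      by (auto simp: nc_mult_mono_right split: if_splits)
    then show "x \<in> (\<lambda>u. u @ v) ` {u. q u \<noteq> 0}"
      by (intro image_eqI[of _ _ "take (length x - length v) x"]) (auto, metis append_take_drop_id)
  qed
  have "pr ?m g = (\<Sum>x\<in>(\<lambda>u. u @ v) ` {u. q u \<noteq> 0}. ?m x * g x)"
    unfolding pr_def using assms sub by (intro sum.mono_neutral_left) auto
  also have "\<dots> = (\<Sum>u\<in>{u. q u \<noteq> 0}. ?m (u @ v) * g (u @ v))"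
    by (subst sum.reindex) (auto simp: inj_on_def)
  finally show ?thesis by (simp add: val)
qed

lemma pr_lmono:
  assumes "finite {u. q u \<noteq> 0}"
  shows "pr (nc_mult (mono v) q) g = (\<Sum>u\<in>{u. q u \<noteq> 0}. q u * g (v @ u))"
proof -
  let ?m = "nc_mult (mono v) q"
  have val: "?m (v @ u) = q u" for u by (simp add: nc_mult_mono_left)
  have sub: "{x. ?m x \<noteq> 0} \<subseteq> (\<lambda>u. v @ u) ` {u. q u \<noteq> 0}"
  proof
    fix x assume "x \<in> {x. ?m x \<noteq> 0}"
    then have "length v \<le> length x" "take (length v) x = v" "q (drop (length v) x) \<noteq> 0"
      by (auto simp: nc_mult_mono_left split: if_splits)
    then show "x \<in> (\<lambda>u. v @ u) ` {u. q u \<noteq> 0}"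
      by (intro image_eqI[of _ _ "drop (length v) x"]) (auto, metis append_take_drop_id)
  qed
  have "pr ?m g = (\<Sum>x\<in>(\<lambda>u. v @ u) ` {u. q u \<noteq> 0}. ?m x * g x)"
    unfolding pr_def using assms sub by (intro sum.mono_neutral_left) auto
  also have "\<dots> = (\<Sum>u\<in>{u. q u \<noteq> 0}. ?m (v @ u) * g (v @ u))"
    by (subst sum.reindex) (auto simp: inj_on_def)
  finally show ?thesis by (simp add: val)
qed

interpretation fv: vector_space sc
  by unfold_locales (auto simp: sc_def fun_eq_iff algebra_simps)

interpretation fvp: vector_space_pair sc sc ..

lemma fun_sum_apply: "(\<Sum>i\<in>A. f i) x = (\<Sum>i\<in>A. f i x)"
  for f :: "'i \<Rightarrow> 'a \<Rightarrow> 'b::comm_monoid_add"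
  by (induction A rule: infinite_finite_induct) auto

lemma fin_expand:
  assumes "finite W" "\<And>w. w \<notin> W \<Longrightarrow> h w = 0"
  shows "h = (\<Sum>w\<in>W. sc (h w) (mono w))"
proof
  fix v
  have "(\<Sum>w\<in>W. sc (h w) (mono w)) v = (\<Sum>w\<in>W. if w = v then h v else 0)"
    unfolding fun_sum_apply sc_def mono_def by (intro sum.cong) auto
  also have "\<dots> = h v" using assms by (simp add: sum.delta)
  finally show "h v = (\<Sum>w\<in>W. sc (h w) (mono w)) v" by simp
qed

lemma lin_expand:
  assumes L: "Vector_Spaces.linear sc sc g" and "finite W" "\<And>w. w \<notin> W \<Longrightarrow> h w = 0"
  shows "g h v = (\<Sum>w\<in>W. h w * g (mono w) v)"
proof -
  interpret gl: Vector_Spaces.linear sc sc g by (fact L)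
  have "g h = g (\<Sum>w\<in>W. sc (h w) (mono w))" using fin_expand[OF assms(2,3)] by simp
  also have "\<dots> = (\<Sum>w\<in>W. sc (h w) (g (mono w)))" by (simp add: gl.sum gl.scale)
  finally show ?thesis by (simp add: fun_sum_apply sc_def)
qed



definition Wk :: "nat \<Rightarrow> nat \<Rightarrow> nat list set" where
  "Wk d k = {w. set w \<subseteq> {..<d} \<and> length w \<le> k}"

definition Vs :: "nat \<Rightarrow> (nat list \<Rightarrow> complex) set \<Rightarrow> nat \<Rightarrow> (nat list \<Rightarrow> complex) set" where
  "Vs d J k = {g. (\<forall>w. g w \<noteq> 0 \<longrightarrow> w \<in> Wk d k) \<and> (\<forall>q\<in>J. pr q g = 0)}"

lemma finite_Wk: "finite (Wk d k)"
  unfolding Wk_def by (rule finite_lists_length_le) auto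

lemma nil_Wk: "[] \<in> Wk d k" unfolding Wk_def by auto

lemma pr_zero: "pr q (\<lambda>w. 0) = 0" unfolding pr_def by simp
lemma pr_add: "pr q (\<lambda>w. x w + y w) = pr q x + pr q y"
  unfolding pr_def by (simp add: distrib_left sum.distrib)
lemma pr_scale: "pr q (\<lambda>w. c * x w) = c * pr q x"
  unfolding pr_def by (simp add: sum_distrib_left algebra_simps)

lemma subspace_Vs: "fv.subspace (Vs d J k)"
proof (rule fv.subspaceI)
  show "0 \<in> Vs d J k" unfolding Vs_def zero_fun_def using pr_zero by simp
  show "x + y \<in> Vs d J k" if "x \<in> Vs d J k" "y \<in> Vs d J k" for x y
  proof -
    have "x + y = (\<lambda>w. x w + y w)" by (simp add: fun_eq_iff)
    moreover have "(\<lambda>w. x w + y w) \<in> Vs d J k"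
      using that unfolding Vs_def by (auto simp: pr_add) (metis add.left_neutral)
    ultimately show ?thesis by simp
  qed
  show "sc c x \<in> Vs d J k" if "x \<in> Vs d J k" for c x
    using that unfolding Vs_def sc_def by (auto simp: pr_scale)
qed

lemma exists_P:
  "\<exists>P. Vector_Spaces.linear sc sc P \<and> (\<forall>v\<in>Vs d J k. P v = v) \<and> (\<forall>x. P x \<in> Vs d J k)"
proof -
  obtain BV where BV: "BV \<subseteq> Vs d J k" "fv.independent BV" "Vs d J k \<subseteq> fv.span BV"
    using fv.maximal_independent_subset by blast
  define C where "C = fv.extend_basis BV"
  have C: "BV \<subseteq> C" "fv.independent C" "fv.span C = UNIV"
    unfolding C_def using BV(2) fv.extend_basis_superset fv.independent_extend_basis fv.span_extend_basis
    by auto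
  obtain P where P: "Vector_Spaces.linear sc sc P" "\<forall>x\<in>C. P x = (if x \<in> BV then x else 0)"
    using fvp.linear_independent_extend[OF C(2), of "\<lambda>x. if x \<in> BV then x else 0"] by blast
  have id: "P v = v" if "v \<in> Vs d J k" for v
  proof -
    have "P v = id v"
      by (rule fvp.linear_eq_on_span[OF P(1) fv.linear_id _ subsetD[OF BV(3) that]])
        (use P(2) C(1) in auto)
    then show ?thesis by simp
  qed
  have rng: "P x \<in> Vs d J k" for x
  proof -
    have "P ` C \<subseteq> Vs d J k"
      using P(2) BV(1) fv.subspace_0[OF subspace_Vs] by auto
    then have "fv.span (P ` C) \<subseteq> Vs d J k"
      by (rule fv.span_minimal[OF _ subspace_Vs])
    moreover have "P x \<in> P ` fv.span C" using C(3) by auto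
    ultimately show ?thesis using fvp.linear_span_image[OF P(1), of C] by auto
  qed
  show ?thesis using P(1) id rng by blast
qed

lemma exists_f0:
  assumes H: "nc_hom_ideal d J" and pP: "p \<in> nc_poly d" and pJ: "p \<notin> J"
    and pk: "\<And>w. p w \<noteq> 0 \<Longrightarrow> length w \<le> k"
  shows "\<exists>f0\<in>Vs d J k. pr p f0 = 1"
proof -
  have J: "nc_ideal d J" using H unfolding nc_hom_ideal_def by blast
  define Jk where "Jk = {q \<in> J. \<forall>w. q w \<noteq> 0 \<longrightarrow> w \<in> Wk d k}"
  have sJk: "fv.subspace Jk"
  proof (rule fv.subspaceI)
    show "0 \<in> Jk" unfolding Jk_def zero_fun_def using id_zero[OF J] by simp
    show "x + y \<in> Jk" if "x \<in> Jk" "y \<in> Jk" for x y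
    proof -
      have "x + y = (\<lambda>w. x w + y w)" by (simp add: fun_eq_iff)
      moreover have "(\<lambda>w. x w + y w) \<in> Jk"
        using that id_add[OF J] unfolding Jk_def by auto (metis add.left_neutral)
      ultimately show ?thesis by simp
    qed
    show "sc c x \<in> Jk" if "x \<in> Jk" for c x
      using that id_scale[OF J] unfolding Jk_def sc_def by auto
  qed
  obtain B where B: "B \<subseteq> Jk" "fv.independent B" "Jk \<subseteq> fv.span B"
    using fv.maximal_independent_subset by blast
  have spanB: "fv.span B \<subseteq> Jk" using B(1) sJk by (rule fv.span_minimal)
  have pB: "p \<notin> fv.span B" using spanB pJ unfolding Jk_def by auto
  then have pB': "p \<notin> B" using fv.span_base by blast
  have ind: "fv.independent (insert p B)" by (rule fv.independent_insertI[OF pB B(2)])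
  obtain g where g: "Vector_Spaces.linear sc sc g" "\<forall>x\<in>insert p B. g x = (if x = p then cst 1 else 0)"
    using fvp.linear_independent_extend[OF ind, of "\<lambda>x. if x = p then cst 1 else 0"] by blast
  have g0: "g q = 0" if "q \<in> Jk" for q
    by (rule fvp.linear_eq_0_on_span[OF g(1) _ subsetD[OF B(3) that]]) (use g(2) pB' in auto)
  define f0 where "f0 = (\<lambda>w. if w \<in> Wk d k then g (mono w) [] else 0)"
  have f0W: "\<And>w. w \<notin> Wk d k \<Longrightarrow> f0 w = 0" unfolding f0_def by simp
  have key: "pr q f0 = g q []" if "finite {u. q u \<noteq> 0}" "\<And>w. q w \<noteq> 0 \<Longrightarrow> w \<in> Wk d k" for q
  proof -
    have "pr q f0 = (\<Sum>w\<in>Wk d k. q w * f0 w)" by (rule pr_W[OF that(1) finite_Wk f0W])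
    also have "\<dots> = (\<Sum>w\<in>Wk d k. q w * g (mono w) [])" unfolding f0_def by simp
    also have "\<dots> = g q []"
      by (rule lin_expand[OF g(1) finite_Wk, symmetric]) (use that(2) in blast)
    finally show ?thesis .
  qed
  have pfin: "finite {u. p u \<noteq> 0}" and pW: "\<And>w. p w \<noteq> 0 \<Longrightarrow> w \<in> Wk d k"
    using pP pk unfolding nc_poly_def Wk_def by auto
  have "pr p f0 = 1" using key[OF pfin pW] g(2) by (simp add: cst_def)
  moreover have "f0 \<in> Vs d J k"
    unfolding Vs_def
  proof (intro CollectI conjI allI impI ballI)
    show "w \<in> Wk d k" if "f0 w \<noteq> 0" for w using that f0W by blast
    show "pr q f0 = 0" if q: "q \<in> J" for q
    proof -
      have qP: "q \<in> nc_poly d" using id_poly[OF J q] .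
      have tfin: "finite {u. trunc k q u \<noteq> 0}"
        using qP unfolding nc_poly_def trunc_def by (auto intro: finite_subset[of _ "{u. q u \<noteq> 0}"])
      have tW: "w \<in> Wk d k" if "trunc k q w \<noteq> 0" for w
        using that qP unfolding trunc_def nc_poly_def Wk_def by (auto split: if_splits)
      have tJk: "trunc k q \<in> Jk" unfolding Jk_def using trunc_in[OF H q] tW by blast
      have "pr q f0 = (\<Sum>w\<in>Wk d k. q w * f0 w)"
        using qP unfolding nc_poly_def by (intro pr_W[OF _ finite_Wk f0W]) auto
      also have "\<dots> = (\<Sum>w\<in>Wk d k. trunc k q w * f0 w)"
        by (intro sum.cong refl) (auto simp: trunc_def Wk_def)
      also have "\<dots> = pr (trunc k q) f0" by (rule pr_W[OF tfin finite_Wk f0W, symmetric])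
      also have "\<dots> = g (trunc k q) []" by (rule key[OF tfin tW])
      also have "\<dots> = 0" using g0[OF tJk] by simp
      finally show ?thesis .
    qed
  qed
  ultimately show ?thesis by blast
qed



definition Psi :: "nat \<Rightarrow> nat \<Rightarrow> (nat list \<Rightarrow> complex) \<Rightarrow> nat \<Rightarrow> complex" where
  "Psi d k h = (\<lambda>n. if n \<in> to_nat ` Wk d k then h (from_nat n) else 0)"

definition Phi :: "nat \<Rightarrow> nat \<Rightarrow> (nat \<Rightarrow> complex) \<Rightarrow> nat list \<Rightarrow> complex" where
  "Phi d k x = (\<lambda>w. if w \<in> Wk d k then x (to_nat w) else 0)"

definition Top :: "nat \<Rightarrow> nat \<Rightarrow> ((nat list \<Rightarrow> complex) \<Rightarrow> nat list \<Rightarrow> complex) \<Rightarrow> nat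
     \<Rightarrow> (nat \<Rightarrow> complex) \<Rightarrow> nat \<Rightarrow> complex" where
  "Top d k P a = (\<lambda>x. if x \<in> l2 then (\<lambda>n. \<Sum>w\<in>Wk d k. x (to_nat w) * Psi d k (sh [a] (P (mono w))) n) else (\<lambda>n. 0))"

definition Tl where "Tl d k P = map (Top d k P) [0..<d]"

lemma Psi_l2: "Psi d k h \<in> l2"
  by (rule l2_fin[of "to_nat ` Wk d k"]) (auto simp: Psi_def finite_Wk)

lemma Phi_Psi: assumes "\<And>w. h w \<noteq> 0 \<Longrightarrow> w \<in> Wk d k" shows "Phi d k (Psi d k h) = h"
proof
  fix w show "Phi d k (Psi d k h) w = h w"
    using assms unfolding Phi_def Psi_def by (cases "w \<in> Wk d k") auto
qed

lemma Psi_at: "w \<in> Wk d k \<Longrightarrow> Psi d k h (to_nat w) = h w"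
  unfolding Psi_def by auto

lemma Top_bop: "Top d k P a \<in> bop"
  unfolding Top_def
  by (rule bop_fin[OF finite_Wk finite_imageI[OF finite_Wk]]) (auto simp: Psi_def)

lemma sh_sh: "sh [a] (sh u G) = sh (a # u) G"
  unfolding sh_def by simp

context
  fixes d J k P
  assumes H: "nc_hom_ideal d J"
    and Plin: "Vector_Spaces.linear sc sc P"
    and Pid: "\<And>v. v \<in> Vs d J k \<Longrightarrow> P v = v"
    and Prng: "\<And>x. P x \<in> Vs d J k"
begin

lemma Top_eq:
  assumes x: "x \<in> l2"
  shows "Top d k P a x = Psi d k (sh [a] (P (Phi d k x)))"
proof
  fix n
  show "Top d k P a x n = Psi d k (sh [a] (P (Phi d k x))) n"
  proof (cases "n \<in> to_nat ` Wk d k")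
    case True
    have "P (Phi d k x) (from_nat n @ [a]) = (\<Sum>w\<in>Wk d k. Phi d k x w * P (mono w) (from_nat n @ [a]))"
      by (rule lin_expand[OF Plin finite_Wk]) (simp add: Phi_def)
    also have "\<dots> = (\<Sum>w\<in>Wk d k. x (to_nat w) * P (mono w) (from_nat n @ [a]))"
      by (intro sum.cong refl) (simp add: Phi_def)
    finally show ?thesis using True x unfolding Top_def Psi_def sh_def by simp
  next
    case False
    then show ?thesis using x unfolding Top_def Psi_def by simp
  qed
qed

lemma HJ': "nc_ideal d J" using H unfolding nc_hom_ideal_def by blast

lemma sh_Vs:
  assumes h: "h \<in> Vs d J k" and u: "set u \<subseteq> {..<d}"
  shows "sh u h \<in> Vs d J k"
  unfolding Vs_def
proof (intro CollectI conjI allI impI ballI)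
  show "w \<in> Wk d k" if "sh u h w \<noteq> 0" for w
  proof -
    have "w @ u \<in> Wk d k" using that h unfolding sh_def Vs_def by auto
    then show ?thesis unfolding Wk_def by auto
  qed
  show "pr q (sh u h) = 0" if q: "q \<in> J" for q
  proof -
    have qf: "finite {u. q u \<noteq> 0}" using id_poly[OF HJ' q] unfolding nc_poly_def by auto
    have "pr q (sh u h) = pr (nc_mult q (mono u)) h"
      unfolding pr_rmono[OF qf] unfolding pr_def sh_def ..
    also have "\<dots> = 0" using h id_rmono[OF HJ' q u] unfolding Vs_def by auto
    finally show ?thesis .
  qed
qed

lemma Top_Psi: "h \<in> Vs d J k \<Longrightarrow> Top d k P a (Psi d k h) = Psi d k (sh [a] h)"
  using Top_eq[OF Psi_l2] Phi_Psi[of h d k] Pid[of h] unfolding Vs_def by auto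

lemma Tl_nth: "a < d \<Longrightarrow> Tl d k P ! a = Top d k P a"
  unfolding Tl_def by simp

lemma opword_gen:
  assumes x: "x \<in> l2"
  shows "set u \<subseteq> {..<d} \<Longrightarrow> u \<noteq> [] \<Longrightarrow> opword (Tl d k P) u x = Psi d k (sh u (P (Phi d k x)))"
proof (induction u)
  case Nil then show ?case by simp
next
  case (Cons a u)
  have a: "a < d" using Cons.prems by auto
  show ?case
  proof (cases "u = []")
    case True
    have "idH x = x" using x unfolding idH_def by simp
    then show ?thesis using True a Top_eq[OF x] by (simp add: Tl_nth)
  next
    case False
    then have IH: "opword (Tl d k P) u x = Psi d k (sh u (P (Phi d k x)))"
      using Cons by auto
    have "sh u (P (Phi d k x)) \<in> Vs d J k" using sh_Vs[OF Prng] Cons.prems by auto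
    then show ?thesis using a IH Top_Psi by (simp add: Tl_nth sh_sh)
  qed
qed

lemma opword_out:
  assumes x: "x \<notin> l2"
  shows "set u \<subseteq> {..<d} \<Longrightarrow> opword (Tl d k P) u x = (\<lambda>n. 0)"
proof (induction u)
  case Nil then show ?case using x by (simp add: idH_def)
next
  case (Cons a u)
  then show ?case using l2_zero by (simp add: Tl_nth Top_def)
qed

lemma Tl_Z:
  assumes c0: "\<And>q. q \<in> J \<Longrightarrow> q [] = 0"
  shows "Tl d k P \<in> Zset d J"
  unfolding Zset_def
proof (intro CollectI conjI ballI)
  show "length (Tl d k P) = d" unfolding Tl_def by simp
  show "set (Tl d k P) \<subseteq> bop" unfolding Tl_def using Top_bop by auto
  show "nc_eval q (Tl d k P) = zeroH" if q: "q \<in> J" for q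
  proof -
    have qP: "q \<in> nc_poly d" using id_poly[OF HJ' q] .
    have qf: "finite {u. q u \<noteq> 0}" and qv: "\<And>u. q u \<noteq> 0 \<Longrightarrow> set u \<subseteq> {..<d}"
      using qP unfolding nc_poly_def by auto
    have "nc_eval q (Tl d k P) x n = 0" for x n
    proof (cases "x \<in> l2")
      case False
      then show ?thesis unfolding nc_eval_def using opword_out qv by simp
    next
      case True
      define G where "G = P (Phi d k x)"
      have GV: "G \<in> Vs d J k" unfolding G_def by (rule Prng)
      have "nc_eval q (Tl d k P) x n = (\<Sum>u\<in>{u. q u \<noteq> 0}. q u * Psi d k (sh u G) n)"
        unfolding nc_eval_def G_def
      proof (intro sum.cong refl)
        fix u assume "u \<in> {u. q u \<noteq> 0}"
        then have "u \<noteq> []" "set u \<subseteq> {..<d}" using c0[OF q] qv by auto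
        then show "q u * opword (Tl d k P) u x n = q u * Psi d k (sh u (P (Phi d k x))) n"
          using opword_gen[OF True] by simp
      qed
      also have "\<dots> = 0"
      proof (cases "n \<in> to_nat ` Wk d k")
        case False then show ?thesis unfolding Psi_def by simp
      next
        case True
        then obtain w where w: "w \<in> Wk d k" "n = to_nat w" by auto
        have "(\<Sum>u\<in>{u. q u \<noteq> 0}. q u * Psi d k (sh u G) n) = (\<Sum>u\<in>{u. q u \<noteq> 0}. q u * G (w @ u))"
          using w by (simp add: Psi_at sh_def)
        also have "\<dots> = pr (nc_mult (mono w) q) G" by (rule pr_lmono[OF qf, symmetric])
        also have "\<dots> = 0"
          using GV id_lmono[OF HJ' q] w(1) unfolding Vs_def Wk_def by auto
        finally show ?thesis .
      qed
      finally show ?thesis .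
    qed
    then show ?thesis unfolding zeroH_def by (simp add: fun_eq_iff)
  qed
qed

lemma Tl_p:
  assumes pP: "p \<in> nc_poly d" and f0: "f0 \<in> Vs d J k" and pf: "pr p f0 = 1"
  shows "nc_eval p (Tl d k P) \<noteq> zeroH"
proof
  assume E: "nc_eval p (Tl d k P) = zeroH"
  define x0 where "x0 = Psi d k f0"
  have x0: "x0 \<in> l2" unfolding x0_def by (rule Psi_l2)
  have Px: "P (Phi d k x0) = f0"
    unfolding x0_def using f0 Pid Phi_Psi[of f0 d k] unfolding Vs_def by auto
  have pv: "\<And>u. p u \<noteq> 0 \<Longrightarrow> set u \<subseteq> {..<d}" using pP unfolding nc_poly_def by auto
  have "nc_eval p (Tl d k P) x0 (to_nat ([]::nat list)) = (\<Sum>u\<in>{u. p u \<noteq> 0}. p u * f0 u)"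
    unfolding nc_eval_def
  proof (intro sum.cong refl)
    fix u assume u: "u \<in> {u. p u \<noteq> 0}"
    show "p u * opword (Tl d k P) u x0 (to_nat ([]::nat list)) = p u * f0 u"
    proof (cases "u = []")
      case True
      have "opword (Tl d k P) u x0 (to_nat ([]::nat list)) = f0 u"
        using x0 Psi_at[OF nil_Wk, of d k f0] True by (simp add: idH_def x0_def)
      then show ?thesis by simp
    next
      case False
      then show ?thesis using opword_gen[OF x0, of u] pv u Px
        by (simp add: Psi_at nil_Wk sh_def)
    qed
  qed
  also have "\<dots> = 1" using pf unfolding pr_def .
  finally have e1: "nc_eval p (Tl d k P) x0 (to_nat ([]::nat list)) = 1" .
  have "nc_eval p (Tl d k P) x0 (to_nat ([]::nat list)) = 0" using E by (simp add: zeroH_def)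
  then show False using e1 by simp
qed

end

theorem part1:
  assumes H: "nc_hom_ideal d J"
  shows "Iset d (Zset d J) = J"
proof
  have J: "nc_ideal d J" using H unfolding nc_hom_ideal_def by blast
  show "J \<subseteq> Iset d (Zset d J)"
    unfolding Iset_def Zset_def using id_poly[OF J] by auto
  show "Iset d (Zset d J) \<subseteq> J"
  proof (rule ccontr)
    assume "\<not> Iset d (Zset d J) \<subseteq> J"
    then obtain p where p: "p \<in> Iset d (Zset d J)" "p \<notin> J" by blast
    have pP: "p \<in> nc_poly d" using p unfolding Iset_def by auto
    then have "finite (length ` {w. p w \<noteq> 0})" unfolding nc_poly_def by auto
    then obtain k where "\<forall>m\<in>length ` {w. p w \<noteq> 0}. m \<le> k"
      unfolding finite_nat_set_iff_bounded_le by blast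
    then have k: "\<And>w. p w \<noteq> 0 \<Longrightarrow> length w \<le> k" by auto
    obtain f0 where f0: "f0 \<in> Vs d J k" "pr p f0 = 1"
      using exists_f0[OF H pP p(2) k] by blast
    obtain P where P: "Vector_Spaces.linear sc sc P" "\<forall>v\<in>Vs d J k. P v = v" "\<forall>x. P x \<in> Vs d J k"
      using exists_P by blast
    have c0: "\<And>q. q \<in> J \<Longrightarrow> q [] = 0" using const_zero[OF H pP p(2)] .
    have "Tl d k P \<in> Zset d J" using Tl_Z[OF H P(1)] P(2,3) c0 by blast
    moreover have "nc_eval p (Tl d k P) \<noteq> zeroH" using Tl_p[OF H P(1) _ _ pP f0] P(2,3) by blast
    ultimately show False using p(1) unfolding Iset_def by auto
  qed
qed



lemma nc_var_mono: "nc_var i = mono [i]"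
  unfolding nc_var_def mono_def by simp

lemma zeroH_bop: "zeroH \<in> bop"
proof -
  have "(\<lambda>x. if x \<in> l2 then (\<lambda>n. \<Sum>j\<in>({}::nat set). x (id j) * (\<lambda>j n. 0) j n) else (\<lambda>n. 0)) \<in> bop"
    by (rule bop_fin) auto
  moreover have "(\<lambda>x. if x \<in> l2 then (\<lambda>n. \<Sum>j\<in>({}::nat set). x (id j) * (\<lambda>j n. 0) j n) else (\<lambda>n. 0)) = zeroH"
    unfolding zeroH_def by (simp add: fun_eq_iff)
  ultimately show ?thesis by simp
qed

lemma opword_zero: "set u \<subseteq> {..<d} \<Longrightarrow> u \<noteq> [] \<Longrightarrow> opword (replicate d zeroH) u x = (\<lambda>n. 0)"
  by (cases u) (auto simp: zeroH_def)

lemma eval_zero: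
  assumes q: "q \<in> nc_poly d"
  shows "nc_eval q (replicate d zeroH) x n = q [] * idH x n"
proof -
  have qf: "finite {u. q u \<noteq> 0}" and qv: "\<And>u. q u \<noteq> 0 \<Longrightarrow> set u \<subseteq> {..<d}"
    using q unfolding nc_poly_def by auto
  have "nc_eval q (replicate d zeroH) x n = (\<Sum>u\<in>{u. q u \<noteq> 0}. if u = [] then q [] * idH x n else 0)"
    unfolding nc_eval_def
  proof (intro sum.cong refl)
    fix u assume "u \<in> {u. q u \<noteq> 0}"
    then show "q u * opword (replicate d zeroH) u x n = (if u = [] then q [] * idH x n else 0)"
      using opword_zero[OF qv] by auto
  qed
  also have "\<dots> = q [] * idH x n"
    using qf by (cases "q [] = 0") (auto simp: sum.delta')
  finally show ?thesis .
qed

lemma eval_zero_iff: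
  assumes q: "q \<in> nc_poly d"
  shows "nc_eval q (replicate d zeroH) = zeroH \<longleftrightarrow> q [] = 0"
proof
  assume "q [] = 0" then show "nc_eval q (replicate d zeroH) = zeroH"
    using eval_zero[OF q] by (simp add: fun_eq_iff zeroH_def)
next
  assume E: "nc_eval q (replicate d zeroH) = zeroH"
  define e where "e = (\<lambda>n::nat. if n = 0 then (1::complex) else 0)"
  have e: "e \<in> l2" unfolding e_def by (rule l2_fin[of "{0}"]) auto
  have "nc_eval q (replicate d zeroH) e 0 = 0" using E by (simp add: zeroH_def)
  then show "q [] = 0" using eval_zero[OF q, of e 0] e by (simp add: idH_def e_def)
qed

definition N0 :: "nat \<Rightarrow> (nat list \<Rightarrow> complex) set" where
  "N0 d = {q \<in> nc_poly d. q [] = 0}"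

lemma Iset_zero: "Iset d {replicate d zeroH} = N0 d"
  unfolding Iset_def N0_def using eval_zero_iff by auto

lemma nc_mult_nil: "nc_mult a b [] = a [] * b []"
  unfolding nc_mult_def by simp

lemma N0_ideal: "nc_ideal d (N0 d)"
proof (rule nc_idealI)
  show "N0 d \<subseteq> nc_poly d" unfolding N0_def by auto
  show "(\<lambda>w. 0) \<in> N0 d" unfolding N0_def using nc_poly_zero by auto
  show "(\<lambda>w. p w + q w) \<in> N0 d" if "p \<in> N0 d" "q \<in> N0 d" for p q
    using that nc_poly_add unfolding N0_def by auto
  show "nc_mult a (nc_mult p b) \<in> N0 d" if "p \<in> N0 d" "a \<in> nc_poly d" "b \<in> nc_poly d" for p a b
    using that nc_poly_mult unfolding N0_def by (auto simp: nc_mult_nil)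
qed

lemma vars_poly: "nc_var ` {..<d} \<subseteq> nc_poly d"
  using nc_poly_mono by (auto simp: nc_var_mono)

lemma X_hom: "nc_hom_ideal d (nc_gen_ideal d (nc_var ` {..<d}))"
  unfolding nc_hom_ideal_def
proof (intro conjI exI)
  show "nc_ideal d (nc_gen_ideal d (nc_var ` {..<d}))" by (rule gen_ideal(1)[OF vars_poly])
  show "nc_var ` {..<d} \<subseteq> nc_poly d" by (rule vars_poly)
  show "\<forall>s\<in>nc_var ` {..<d}. nc_homogeneous s"
    unfolding nc_homogeneous_def nc_var_def by (auto intro: exI[of _ 1])
qed simp

lemma bop_zero_arg: "T \<in> bop \<Longrightarrow> T (\<lambda>n. 0) = (\<lambda>n. 0)"
proof -
  assume T: "T \<in> bop"
  have "\<forall>x\<in>l2. \<forall>c. T (\<lambda>n. c * x n) = (\<lambda>n. c * T x n)"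
    using T unfolding bop_def by blast
  from this[rule_format, OF l2_zero, of 0] show ?thesis by simp
qed

lemma bop_idH: "T \<in> bop \<Longrightarrow> T (idH x) = T x"
proof -
  assume T: "T \<in> bop"
  show ?thesis
  proof (cases "x \<in> l2")
    case True then show ?thesis by (simp add: idH_def)
  next
    case False
    then have "T x = (\<lambda>n. 0)" using T unfolding bop_def by blast
    then show ?thesis using False bop_zero_arg[OF T] by (simp add: idH_def)
  qed
qed

lemma Z_X: "Zset d (nc_gen_ideal d (nc_var ` {..<d})) = {replicate d zeroH}"
proof
  let ?X = "nc_gen_ideal d (nc_var ` {..<d})"
  have XN: "?X \<subseteq> N0 d"
    by (rule gen_ideal_least[OF N0_ideal]) (use vars_poly in \<open>auto simp: N0_def nc_var_def\<close>)
  show "{replicate d zeroH} \<subseteq> Zset d ?X"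
    unfolding Zset_def using zeroH_bop XN eval_zero_iff unfolding N0_def by auto
  show "Zset d ?X \<subseteq> {replicate d zeroH}"
  proof
    fix T assume T: "T \<in> Zset d ?X"
    have len: "length T = d" and Tb: "set T \<subseteq> bop" using T unfolding Zset_def by auto
    have "T ! a = zeroH" if a: "a < d" for a
    proof -
      have "nc_var a \<in> ?X" using gen_ideal(2)[OF vars_poly] a by auto
      then have E: "nc_eval (nc_var a) T = zeroH" using T unfolding Zset_def by auto
      have "{u. nc_var a u \<noteq> 0} = {[a]}" unfolding nc_var_def by auto
      then have "nc_eval (nc_var a) T = (\<lambda>x. (T ! a) (idH x))"
        unfolding nc_eval_def by (simp add: nc_var_def fun_eq_iff)
      moreover have "T ! a \<in> bop" using Tb a len by auto
      ultimately have "(\<lambda>x. (T ! a) x) = zeroH" using E bop_idH by auto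
      then show ?thesis by simp
    qed
    then have "T = replicate d zeroH" using len by (intro nth_equalityI) auto
    then show "T \<in> {replicate d zeroH}" by simp
  qed
qed

theorem mainTheorem14:
  fixes d :: nat and J :: "(nat list \<Rightarrow> complex) set"
  assumes "nc_hom_ideal d J"
  shows "Iset d (Zset d J) = J \<and>
         (Zset d J = {replicate d zeroH} \<longleftrightarrow> J = nc_gen_ideal d (nc_var ` {..<d}))"
proof
  show P1: "Iset d (Zset d J) = J" by (rule part1[OF assms])
  have PX: "Iset d (Zset d (nc_gen_ideal d (nc_var ` {..<d}))) = nc_gen_ideal d (nc_var ` {..<d})"
    by (rule part1[OF X_hom])
  show "Zset d J = {replicate d zeroH} \<longleftrightarrow> J = nc_gen_ideal d (nc_var ` {..<d})"
  proof
    assume Z: "Zset d J = {replicate d zeroH}"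
    have "J = N0 d" using P1 Z Iset_zero by simp
    moreover have "nc_gen_ideal d (nc_var ` {..<d}) = N0 d" using PX Z_X Iset_zero by simp
    ultimately show "J = nc_gen_ideal d (nc_var ` {..<d})" by simp
  next
    assume "J = nc_gen_ideal d (nc_var ` {..<d})"
    then show "Zset d J = {replicate d zeroH}" using Z_X by simp
  qed
qed


end
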